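(* Let $M^{n+1}$ have non-negative sectional curvature, let $V$ be a self-adjoint family of Jacobi fields along a geodesic $c:[t_0,t_2]\to M$, let $t_1\in(t_0,t_2)$, and suppose $X\in V$ satisfies on $[t_0,t_1]$ the conditions: (a) $\|X\|(t)\neq0$ and $\|X\|'(t)=0$ for $t=t_0,t_1$; (b) if $Y\in V$ and $\langle X(t_1),Y(t_1)\rangle=0$ then $\langle X(t_0),Y(t_0)\rangle=0$; (c) if $Y\in V$ and $Y(t)=0$ for some $t\in(t_0,t_1)$ then $\langle X(t_0),Y(t_0)\rangle=0$; (d) if $Y\in V$ and $Y(t_0)=0$ then $\langle X'(t_0),Y'(t_0)\rangle=0$. If there exists $Y\in V$ with $Y(t^* )=0$ for some $t^*\in(t_1,t_2]$ and $\langle X(t_0),Y(t_0)\rangle\neq0$, then $X$ is not parallel on $[t_0,t_2]$.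
   Context: $c$ is a unit-speed geodesic, $E_t=\dot c(t)^\perp$, $'=\nabla_{\dot c}$. A self-adjoint family of Jacobi fields is an $n$-dimensional vector space $V$ of Jacobi fields along $c$, orthogonal to $\dot c$, with $\langle X',Y\rangle=\langle X,Y'\rangle$ for all $X,Y\in V$. *)

theory Defs
  imports "HOL-Analysis.Analysis"
begin

text \<open>Model along the geodesic c on [a,b]: we identify E_t = (c'(t))^perp with real^'n via a
parallel orthonormal frame (so n = dim M - 1 = CARD('n)).  Covariant differentiation along c
becomes ordinary differentiation, and the curvature endomorphism v |-> R(v, c')c' of E_t becomes
a symmetric matrix Rc t.\<close>

definition cov_deriv :: "real \<Rightarrow> real \<Rightarrow> (real \<Rightarrow> real^'n) \<Rightarrow> real \<Rightarrow> real^'n" where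
  "cov_deriv a b Y t = vector_derivative Y (at t within {a..b})"

text \<open>Curvature operator along c: continuous, symmetric, and (non-negative sectional curvature)
positive semidefinite, i.e. K(v, c') |v|^2 = <R(v,c')c', v> >= 0.\<close>
definition curvature_operator_nonneg :: "real \<Rightarrow> real \<Rightarrow> (real \<Rightarrow> real^'n^'n) \<Rightarrow> bool" where
  "curvature_operator_nonneg a b Rc \<longleftrightarrow>
     continuous_on {a..b} Rc \<and>
     (\<forall>t\<in>{a..b}. transpose (Rc t) = Rc t \<and> (\<forall>v. v \<bullet> (Rc t *v v) \<ge> 0))"

definition jacobi_field :: "real \<Rightarrow> real \<Rightarrow> (real \<Rightarrow> real^'n^'n) \<Rightarrow> (real \<Rightarrow> real^'n) \<Rightarrow> bool" where
  "jacobi_field a b Rc Y \<longleftrightarrow>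
     (\<forall>t\<in>{a..b}. (Y has_vector_derivative cov_deriv a b Y t) (at t within {a..b}) \<and>
        (cov_deriv a b Y has_vector_derivative (- (Rc t *v Y t))) (at t within {a..b}))"

definition n_dim_space :: "(real \<Rightarrow> real^'n) set \<Rightarrow> bool" where
  "n_dim_space V \<longleftrightarrow>
     (\<exists>bs :: 'n \<Rightarrow> real \<Rightarrow> real^'n.
        V = {(\<lambda>t. \<Sum>i\<in>UNIV. c i *\<^sub>R bs i t) | c. True} \<and>
        (\<forall>c. (\<lambda>t. \<Sum>i\<in>UNIV. c i *\<^sub>R bs i t) = (\<lambda>t. 0) \<longrightarrow> (\<forall>i. c i = 0)))"

definition self_adjoint_family ::
  "real \<Rightarrow> real \<Rightarrow> (real \<Rightarrow> real^'n^'n) \<Rightarrow> (real \<Rightarrow> real^'n) set \<Rightarrow> bool" where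
  "self_adjoint_family a b Rc V \<longleftrightarrow>
     n_dim_space V \<and> (\<forall>Y\<in>V. jacobi_field a b Rc Y) \<and>
     (\<forall>X\<in>V. \<forall>Y\<in>V. \<forall>t\<in>{a..b}. cov_deriv a b X t \<bullet> Y t = X t \<bullet> cov_deriv a b Y t)"

definition parallel_on :: "real \<Rightarrow> real \<Rightarrow> (real \<Rightarrow> real^'n) \<Rightarrow> bool" where
  "parallel_on a b X \<longleftrightarrow> (\<forall>t\<in>{a..b}. cov_deriv a b X t = 0)"

end

theory Submission
  imports Defs
begin

theorem proposition3p3:
  fixes Rc :: "real \<Rightarrow> real^'n^'n" and V :: "(real \<Rightarrow> real^'n) set"
    and X :: "real \<Rightarrow> real^'n" and t0 t1 t2 :: real
  assumes curv: "curvature_operator_nonneg t0 t2 Rc"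
    and V: "self_adjoint_family t0 t2 Rc V"
    and t01: "t0 < t1" and t12: "t1 < t2"
    and XV: "X \<in> V"
    and a: "\<forall>t\<in>{t0, t1}. X t \<noteq> 0 \<and>
              ((\<lambda>s. norm (X s)) has_real_derivative 0) (at t within {t0..t2})"
    and b: "\<forall>Y\<in>V. X t1 \<bullet> Y t1 = 0 \<longrightarrow> X t0 \<bullet> Y t0 = 0"
    and c: "\<forall>Y\<in>V. (\<exists>t\<in>{t0<..<t1}. Y t = 0) \<longrightarrow> X t0 \<bullet> Y t0 = 0"
    and d: "\<forall>Y\<in>V. Y t0 = 0 \<longrightarrow> cov_deriv t0 t2 X t0 \<bullet> cov_deriv t0 t2 Y t0 = 0"
    and ex: "\<exists>Y\<in>V. (\<exists>ts\<in>{t1<..t2}. Y ts = 0) \<and> X t0 \<bullet> Y t0 \<noteq> 0"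
  shows "\<not> parallel_on t0 t2 X"
proof
  assume par: "parallel_on t0 t2 X"
  from ex obtain Y ts where YV: "Y \<in> V" and ts: "ts \<in> {t1<..t2}" and Y0: "Y ts = 0"
    and ne: "X t0 \<bullet> Y t0 \<noteq> 0" by blast
  have jac: "\<And>Z. Z \<in> V \<Longrightarrow> jacobi_field t0 t2 Rc Z"
    using V unfolding self_adjoint_family_def by blast
  have sa: "\<And>t. t \<in> {t0..t2} \<Longrightarrow> cov_deriv t0 t2 X t \<bullet> Y t = X t \<bullet> cov_deriv t0 t2 Y t"
    using V XV YV unfolding self_adjoint_family_def by blast
  have X0: "\<And>t. t \<in> {t0..t2} \<Longrightarrow> cov_deriv t0 t2 X t = 0"
    using par unfolding parallel_on_def by blast
  have dz: "((\<lambda>t. X t \<bullet> Y t) has_field_derivative 0) (at t within {t0..t2})"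
    if t: "t \<in> {t0..t2}" for t
  proof -
    have dX: "(X has_vector_derivative cov_deriv t0 t2 X t) (at t within {t0..t2})"
      using jac[OF XV] t unfolding jacobi_field_def by blast
    have dY: "(Y has_vector_derivative cov_deriv t0 t2 Y t) (at t within {t0..t2})"
      using jac[OF YV] t unfolding jacobi_field_def by blast
    have e: "X t \<bullet> cov_deriv t0 t2 Y t = 0" using sa[OF t] X0[OF t] by simp
    have "((\<lambda>t. X t \<bullet> Y t) has_derivative
        (\<lambda>h. X t \<bullet> (h *\<^sub>R cov_deriv t0 t2 Y t) + (h *\<^sub>R cov_deriv t0 t2 X t) \<bullet> Y t))
        (at t within {t0..t2})"
      using dX dY unfolding has_vector_derivative_def by (rule has_derivative_inner)
    moreover have "(\<lambda>h. X t \<bullet> (h *\<^sub>R cov_deriv t0 t2 Y t) + (h *\<^sub>R cov_deriv t0 t2 X t) \<bullet> Y t)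
        = (\<lambda>h. h * 0)"
      using e X0[OF t] by (simp add: inner_scaleR_right)
    moreover have "((*) (0::real)) = (\<lambda>_. 0)" by (rule ext) simp
    ultimately show ?thesis unfolding has_field_derivative_def by simp
  qed
  obtain k where k: "\<And>t. t \<in> {t0..t2} \<Longrightarrow> X t \<bullet> Y t = k"
    using has_field_derivative_zero_constant[of "{t0..t2}" "\<lambda>t. X t \<bullet> Y t", OF convex_real_interval(5) dz]
    by blast
  have "X t0 \<bullet> Y t0 = X ts \<bullet> Y ts"
    using k[of t0] k[of ts] ts t01 t12 by auto
  with Y0 ne show False by simp
qed

end
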